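(* Let $W$ be an $\epsilon$-spectral cluster of $G_0$ and let $A\subseteq V_0$ be closed in $G_0$ with $\mathrm{vol}_{G_0}(W\cap A)\ge\frac23\mathrm{vol}_{G_0}(W)$. Then $A$ dominates $W$, i.e. $\mathrm{vol}_{G_0}(W\cap A)>(1-3\epsilon)\mathrm{vol}_{G_0}(W)$.
   Context: Standing setting: $G_0=(V_0,E_0)$ is a finite simple undirected graph and $0<\epsilon\le 1/2000000$. For a graph $H$, $d_H(v)$ is the degree, $\mathrm{vol}_H(S)=\sum_{v\in S}d_H(v)$, $E(S,T)$ is the set of edges with one endpoint in $S$ and the other in $T$, $\partial_H S=E(S,V(H)\setminus S)$. For $V\subseteq V_0$, $G_0|V$ is the induced subgraph. An $\epsilon$-spectral cluster of $G_0$ is $W\subseteq V_0$ with $\mathrm{vol}_{G_0}(W)>0$, $|\partial_{G_0}W|\le\epsilon\,\mathrm{vol}_{G_0}(W)$, and for every $A\subseteq W$ with $r=\mathrm{vol}_{G_0}(A)/\mathrm{vol}_{G_0}(W)$, $|E(A,W\setminus A)|\ge(r(1-r)-\epsilon)\mathrm{vol}_{G_0}(W)$. A set $A\subseteq V(H)$ is closed in $H$ if no $v\in V(H)\setminus A$ with $d_H(v)>0$ has at least $\frac59 d_H(v)$ of its $H$-neighbors in $A$. A set $A\subseteq V_0$ dominates $W$ if $\mathrm{vol}_{G_0}(W\cap A)>(1-3\epsilon)\mathrm{vol}_{G_0}(W)$. *)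

theory Defs
  imports Complex_Main
begin

definition simple_graph :: "'a set \<Rightarrow> 'a set set \<Rightarrow> bool" where
  "simple_graph V E \<longleftrightarrow> finite V \<and> (\<forall>e\<in>E. e \<subseteq> V \<and> card e = 2)"

definition neighbors :: "'a set set \<Rightarrow> 'a \<Rightarrow> 'a set" where
  "neighbors E v = {u. {u, v} \<in> E}"

definition degree :: "'a set set \<Rightarrow> 'a \<Rightarrow> nat" where
  "degree E v = card {e\<in>E. v \<in> e}"

definition vol :: "'a set set \<Rightarrow> 'a set \<Rightarrow> nat" where
  "vol E S = (\<Sum>v\<in>S. degree E v)"

definition cut_edges :: "'a set set \<Rightarrow> 'a set \<Rightarrow> 'a set \<Rightarrow> 'a set set" where
  "cut_edges E S T = {e\<in>E. \<exists>u v. e = {u, v} \<and> u \<in> S \<and> v \<in> T}"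

definition boundary :: "'a set \<Rightarrow> 'a set set \<Rightarrow> 'a set \<Rightarrow> 'a set set" where
  "boundary V E S = cut_edges E S (V - S)"

definition spectral_cluster :: "real \<Rightarrow> 'a set \<Rightarrow> 'a set set \<Rightarrow> 'a set \<Rightarrow> bool" where
  "spectral_cluster \<epsilon> V E W \<longleftrightarrow>
     W \<subseteq> V \<and> vol E W > 0 \<and>
     real (card (boundary V E W)) \<le> \<epsilon> * real (vol E W) \<and>
     (\<forall>A\<subseteq>W. let r = real (vol E A) / real (vol E W) in
        real (card (cut_edges E A (W - A))) \<ge> (r * (1 - r) - \<epsilon>) * real (vol E W))"

definition closed_in_graph :: "'a set \<Rightarrow> 'a set set \<Rightarrow> 'a set \<Rightarrow> bool" where
  "closed_in_graph V E A \<longleftrightarrow> A \<subseteq> V \<and>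
     \<not> (\<exists>v\<in>V - A. degree E v > 0 \<and>
          real (card (neighbors E v \<inter> A)) \<ge> 5/9 * real (degree E v))"

definition dominates :: "real \<Rightarrow> 'a set set \<Rightarrow> 'a set \<Rightarrow> 'a set \<Rightarrow> bool" where
  "dominates \<epsilon> E A W \<longleftrightarrow> real (vol E (W \<inter> A)) > (1 - 3 * \<epsilon>) * real (vol E W)"

end

theory Submission
  imports Defs
begin

lemma arith_core:
  fixes r s e :: real
  assumes "s = 1 - r" "r \<le> 1" "r \<ge> 2/3" "0 < e" "e \<le> 1/2000000"
    and "s * (r - 5/9) \<le> e"
  shows "r > 1 - 3*e"
proof -
  have s0: "s \<ge> 0" using assms by simp
  have "s * (1/9) \<le> s * (r - 5/9)" using s0 assms by (intro mult_left_mono) auto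
  hence s9: "s \<le> 9*e" using assms by simp
  show ?thesis
  proof (cases "s = 0")
    case True then show ?thesis using assms by simp
  next
    case False
    hence sp: "s > 0" using s0 by simp
    have "r > 8/9" using s9 assms by simp
    hence "s * (1/3) < s * (r - 5/9)" using sp by (intro mult_strict_left_mono) auto
    hence "s < 3*e" using assms by simp
    then show ?thesis using assms by simp
  qed
qed

theorem mainTheorem4:
  fixes V0 :: "'a set" and E0 :: "'a set set" and \<epsilon> :: real and W A :: "'a set"
  assumes "simple_graph V0 E0"
    and "0 < \<epsilon>" and "\<epsilon> \<le> 1 / 2000000"
    and "spectral_cluster \<epsilon> V0 E0 W"
    and "closed_in_graph V0 E0 A"
    and "real (vol E0 (W \<inter> A)) \<ge> 2/3 * real (vol E0 W)"
  shows "dominates \<epsilon> E0 A W"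
proof -
  have finV: "finite V0" and EV: "\<And>e. e \<in> E0 \<Longrightarrow> e \<subseteq> V0"
    using assms(1) unfolding simple_graph_def by auto
  have finE: "finite E0"
    by (rule finite_subset[of _ "Pow V0"]) (use EV finV in auto)
  have WV: "W \<subseteq> V0" and vWp: "vol E0 W > 0"
    and cl: "\<And>B. B \<subseteq> W \<Longrightarrow> real (card (cut_edges E0 B (W - B))) \<ge>
       (real (vol E0 B) / real (vol E0 W) * (1 - real (vol E0 B) / real (vol E0 W)) - \<epsilon>) * real (vol E0 W)"
    using assms(4) unfolding spectral_cluster_def Let_def by auto
  have AV: "A \<subseteq> V0" using assms(5) unfolding closed_in_graph_def by auto
  have clA: "\<And>v. v \<in> V0 - A \<Longrightarrow> degree E0 v > 0 \<Longrightarrow>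
      real (card (neighbors E0 v \<inter> A)) < 5/9 * real (degree E0 v)"
  proof -
    fix v assume "v \<in> V0 - A" "degree E0 v > 0"
    thus "real (card (neighbors E0 v \<inter> A)) < 5/9 * real (degree E0 v)"
    proof -
      have "\<not> (real (card (neighbors E0 v \<inter> A)) \<ge> 5/9 * real (degree E0 v))"
        using assms(5) \<open>v \<in> V0 - A\<close> \<open>degree E0 v > 0\<close> unfolding closed_in_graph_def by blast
      thus ?thesis by simp
    qed
  qed
  have finW: "finite W" using WV finV finite_subset by blast
  have nb: "\<And>v. v \<in> W - A \<Longrightarrow> real (card (neighbors E0 v \<inter> (W \<inter> A))) \<le> 5/9 * real (degree E0 v)"
  proof -
    fix v assume v: "v \<in> W - A"
    have fin: "finite (neighbors E0 v \<inter> A)" using AV finV finite_subset by blast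
    have le: "card (neighbors E0 v \<inter> (W \<inter> A)) \<le> card (neighbors E0 v \<inter> A)"
      by (rule card_mono[OF fin]) auto
    show "real (card (neighbors E0 v \<inter> (W \<inter> A))) \<le> 5/9 * real (degree E0 v)"
    proof (cases "degree E0 v > 0")
      case True
      have vv: "v \<in> V0 - A" using v WV by auto
      have "real (card (neighbors E0 v \<inter> (W \<inter> A))) \<le> real (card (neighbors E0 v \<inter> A))"
        using le by (rule of_nat_mono)
      then show ?thesis using clA[OF vv True] by linarith
    next
      case False
      have "{e\<in>E0. v \<in> e} = {}" using False finE unfolding degree_def by simp
      hence "neighbors E0 v = {}" unfolding neighbors_def by auto
      then show ?thesis by simp
    qed
  qed
  have cutsub: "cut_edges E0 (W \<inter> A) (W - (W \<inter> A)) \<subseteq>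
      (\<Union>v\<in>W - A. (\<lambda>u. {u, v}) ` (neighbors E0 v \<inter> (W \<inter> A)))"
    unfolding cut_edges_def neighbors_def by auto
  have "card (cut_edges E0 (W \<inter> A) (W - (W \<inter> A))) \<le>
      card (\<Union>v\<in>W - A. (\<lambda>u. {u, v}) ` (neighbors E0 v \<inter> (W \<inter> A)))"
  proof (rule card_mono[OF _ cutsub])
    show "finite (\<Union>v\<in>W - A. (\<lambda>u. {u, v}) ` (neighbors E0 v \<inter> (W \<inter> A)))"
    proof (rule finite_UN_I)
      show "finite (W - A)" using finW by simp
      fix v show "finite ((\<lambda>u. {u, v}) ` (neighbors E0 v \<inter> (W \<inter> A)))"
        by (rule finite_imageI) (rule finite_subset[OF _ finW], blast)
    qed
  qed
  also have "\<dots> \<le> (\<Sum>v\<in>W - A. card ((\<lambda>u. {u, v}) ` (neighbors E0 v \<inter> (W \<inter> A))))"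
    by (rule card_UN_le) (use finW in auto)
  also have "\<dots> \<le> (\<Sum>v\<in>W - A. card (neighbors E0 v \<inter> (W \<inter> A)))"
    by (rule sum_mono) (rule card_image_le, rule finite_subset[OF _ finW], blast)
  finally have c1: "real (card (cut_edges E0 (W \<inter> A) (W - (W \<inter> A)))) \<le>
      (\<Sum>v\<in>W - A. real (card (neighbors E0 v \<inter> (W \<inter> A))))"
    by (simp only: of_nat_sum[symmetric] of_nat_le_iff)
  also have "\<dots> \<le> (\<Sum>v\<in>W - A. 5/9 * real (degree E0 v))"
    by (rule sum_mono) (rule nb)
  also have "\<dots> = 5/9 * real (vol E0 (W - A))"
    unfolding vol_def by (simp add: sum_distrib_left)
  finally have cutle: "real (card (cut_edges E0 (W \<inter> A) (W - (W \<inter> A)))) \<le> 5/9 * real (vol E0 (W - A))" .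
  have split: "vol E0 W = vol E0 (W \<inter> A) + vol E0 (W - A)"
  proof -
    have "W = (W \<inter> A) \<union> (W - A)" by blast
    hence "(\<Sum>v\<in>W. degree E0 v) = (\<Sum>v\<in>(W \<inter> A) \<union> (W - A). degree E0 v)" by simp
    also have "\<dots> = (\<Sum>v\<in>W \<inter> A. degree E0 v) + (\<Sum>v\<in>W - A. degree E0 v)"
      by (rule sum.union_disjoint) (use finW in auto)
    finally show ?thesis unfolding vol_def .
  qed
  define vw where "vw = real (vol E0 W)"
  define x where "x = real (vol E0 (W \<inter> A))"
  define y where "y = real (vol E0 (W - A))"
  have vwp: "vw > 0" using vWp vw_def by simp
  have xy: "x + y = vw" using split unfolding x_def y_def vw_def by simp
  have y0: "y \<ge> 0" unfolding y_def by simp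
  have c2: "(x / vw * (1 - x / vw) - \<epsilon>) * vw \<le> 5/9 * y"
  proof -
    have e: "W - (W \<inter> A) = W - A" by blast
    have "(x / vw * (1 - x / vw) - \<epsilon>) * vw \<le> real (card (cut_edges E0 (W \<inter> A) (W - (W \<inter> A))))"
      using cl[of "W \<inter> A"] unfolding x_def vw_def by blast
    thus ?thesis using cutle unfolding y_def by linarith
  qed
  define r where "r = x / vw"
  have "(1 - r) * vw = vw - x" using vwp unfolding r_def by (simp add: algebra_simps)
  hence yr: "y = (1 - r) * vw" using xy by simp
  have "(r * (1 - r) - \<epsilon>) * vw \<le> (5/9 * (1 - r)) * vw" using c2 unfolding yr r_def[symmetric] by (simp only: mult.assoc)
  hence "r * (1 - r) - \<epsilon> \<le> 5/9 * (1 - r)" using vwp by simp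
  hence key: "(1 - r) * (r - 5/9) \<le> \<epsilon>" by (simp add: algebra_simps field_simps)
  have r1: "r \<le> 1" using xy y0 vwp unfolding r_def by simp
  have r23: "r \<ge> 2/3" using assms(6) vwp unfolding r_def x_def vw_def by (simp add: field_simps)
  have "r > 1 - 3*\<epsilon>" by (rule arith_core[OF refl r1 r23 assms(2,3) key])
  hence "x > (1 - 3*\<epsilon>) * vw" using vwp unfolding r_def by (simp add: field_simps)
  thus ?thesis unfolding dominates_def x_def vw_def .
qed

end
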